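(* Suppose there is $s\in\{-1,1\}$ with $s\rho_i\ge0$ for all $i$, and the $\rho_i$ are not all zero. Then $u_n>0$ entrywise and $s\,v_n<0$ entrywise (i.e. $v_n$ has constant sign $-s$). Consequently the vector $\bar z_n^S=u_n\vartheta_n^\star+v_n$ either is identically zero or has at least one strictly positive and at least one strictly negative component.
   Context: Fix $n\ge1$, $\sigma>0$, and for each $i$: $c_i>0$, $\gamma_i>0$, $\nu_i>0$, $\rho_i\in(-1,1)$. Define $p_{i,j}=\frac{1}{\gamma_i\nu_j^2}$ for $j\ne i$ and $p_{i,i}=\frac{1}{\gamma_i\nu_i^2+1/c_i}$; for each $j$: $\Theta_{j,n}=\sum_{i=1}^np_{i,j}$, $\zeta_j=p_{j,j}/c_j$, $a_j=\rho_j\zeta_j/\nu_j$, $w_{j,n}=\frac{1}{n\Theta_{j,n}}$; for each $k$: $M_{k,j}=\rho_j\nu_jp_{k,j}$, $\upsilon_{k,n}=\sum_{j=1}^n\rho_j^2\nu_j^2p_{k,j}$, $\varphi_{k,n}=1-\frac{\gamma_k}{n}\upsilon_{k,n}$. Define the $n\times n$ matrix $L_n$ by $(L_n)_{k,j}=\frac{\rho_j^2\zeta_jp_{k,j}}{n\varphi_{k,n}\Theta_{j,n}}$ and vectors $V_n,U_n$ by $(V_n)_k=\frac{n}{\gamma_k\sigma^2\varphi_{k,n}}$, $(U_n)_k=-\frac{1}{\varphi_{k,n}}\Big(\frac{1}{\sigma\sqrt n}\sum_{j=1}^n\frac{1-\zeta_j}{\Theta_{j,n}}M_{k,j}+\frac{1}{\sigma\sqrt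 n}\frac{\rho_k\nu_k}{c_k}p_{k,k}\Big)$. It is known that $\mathrm I_n-L_n$ is invertible with entrywise nonnegative inverse. Set $u_n=(\mathrm I_n-L_n)^{-1}V_n$, $v_n=(\mathrm I_n-L_n)^{-1}U_n$, $\vartheta_n^\star=-\frac{\mathbf 1_n^\top v_n}{\mathbf 1_n^\top u_n}$. (The vector $u_n\vartheta_n^\star+v_n$ is the $z^S$-part of the maximiser of $g(z^Q,z^S)=-\frac1n\sum_i\big(\frac{(z^{Q,i,i})^2}{2c_i}+\frac{\gamma_i}{2}\sum_j\nu_j^2(z^{Q,i,j})^2+\frac{\gamma_i\sigma^2}{2}(z^{S,i})^2+\frac{\gamma_i\sigma}{\sqrt n}z^{S,i}\sum_j\rho_j\nu_jz^{Q,i,j}\big)+\frac1n\sum_i\frac{z^{Q,i,i}}{c_i}$ subject to $\sum_iz^{Q,i,j}=1$ for all $j$ and $\sum_kz^{S,k}=0$.) *)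

theory Defs
  imports "HOL-Analysis.Analysis"
begin

text \<open>The index set {1..n} is rendered as a finite type 'n with n = CARD('n).
  Parameters c, gamma, nu, rho are functions on the index type.\<close>

definition pmat :: "('n::finite \<Rightarrow> real) \<Rightarrow> ('n \<Rightarrow> real) \<Rightarrow> ('n \<Rightarrow> real) \<Rightarrow> 'n \<Rightarrow> 'n \<Rightarrow> real" where
  "pmat c \<gamma> \<nu> i j = (if j \<noteq> i then 1 / (\<gamma> i * (\<nu> j)\<^sup>2) else 1 / (\<gamma> i * (\<nu> i)\<^sup>2 + 1 / c i))"

definition Theta :: "('n::finite \<Rightarrow> real) \<Rightarrow> ('n \<Rightarrow> real) \<Rightarrow> ('n \<Rightarrow> real) \<Rightarrow> 'n \<Rightarrow> real" where
  "Theta c \<gamma> \<nu> j = (\<Sum>i\<in>UNIV. pmat c \<gamma> \<nu> i j)"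

definition zeta :: "('n::finite \<Rightarrow> real) \<Rightarrow> ('n \<Rightarrow> real) \<Rightarrow> ('n \<Rightarrow> real) \<Rightarrow> 'n \<Rightarrow> real" where
  "zeta c \<gamma> \<nu> j = pmat c \<gamma> \<nu> j j / c j"

definition Mmat :: "('n::finite \<Rightarrow> real) \<Rightarrow> ('n \<Rightarrow> real) \<Rightarrow> ('n \<Rightarrow> real) \<Rightarrow> ('n \<Rightarrow> real) \<Rightarrow> 'n \<Rightarrow> 'n \<Rightarrow> real" where
  "Mmat c \<gamma> \<nu> \<rho> k j = \<rho> j * \<nu> j * pmat c \<gamma> \<nu> k j"

definition upsilon :: "('n::finite \<Rightarrow> real) \<Rightarrow> ('n \<Rightarrow> real) \<Rightarrow> ('n \<Rightarrow> real) \<Rightarrow> ('n \<Rightarrow> real) \<Rightarrow> 'n \<Rightarrow> real" where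
  "upsilon c \<gamma> \<nu> \<rho> k = (\<Sum>j\<in>UNIV. (\<rho> j)\<^sup>2 * (\<nu> j)\<^sup>2 * pmat c \<gamma> \<nu> k j)"

definition varphi :: "('n::finite \<Rightarrow> real) \<Rightarrow> ('n \<Rightarrow> real) \<Rightarrow> ('n \<Rightarrow> real) \<Rightarrow> ('n \<Rightarrow> real) \<Rightarrow> 'n \<Rightarrow> real" where
  "varphi c \<gamma> \<nu> \<rho> k = 1 - \<gamma> k / real CARD('n) * upsilon c \<gamma> \<nu> \<rho> k"

definition Lmat :: "('n::finite \<Rightarrow> real) \<Rightarrow> ('n \<Rightarrow> real) \<Rightarrow> ('n \<Rightarrow> real) \<Rightarrow> ('n \<Rightarrow> real) \<Rightarrow> real^'n^'n" where
  "Lmat c \<gamma> \<nu> \<rho> = (\<chi> k j. (\<rho> j)\<^sup>2 * zeta c \<gamma> \<nu> j * pmat c \<gamma> \<nu> k j /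
      (real CARD('n) * varphi c \<gamma> \<nu> \<rho> k * Theta c \<gamma> \<nu> j))"

definition Vvec :: "real \<Rightarrow> ('n::finite \<Rightarrow> real) \<Rightarrow> ('n \<Rightarrow> real) \<Rightarrow> ('n \<Rightarrow> real) \<Rightarrow> ('n \<Rightarrow> real) \<Rightarrow> real^'n" where
  "Vvec \<sigma> c \<gamma> \<nu> \<rho> = (\<chi> k. real CARD('n) / (\<gamma> k * \<sigma>\<^sup>2 * varphi c \<gamma> \<nu> \<rho> k))"

definition Uvec :: "real \<Rightarrow> ('n::finite \<Rightarrow> real) \<Rightarrow> ('n \<Rightarrow> real) \<Rightarrow> ('n \<Rightarrow> real) \<Rightarrow> ('n \<Rightarrow> real) \<Rightarrow> real^'n" where
  "Uvec \<sigma> c \<gamma> \<nu> \<rho> = (\<chi> k. - (1 / varphi c \<gamma> \<nu> \<rho> k) *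
      (1 / (\<sigma> * sqrt (real CARD('n))) *
         (\<Sum>j\<in>UNIV. (1 - zeta c \<gamma> \<nu> j) / Theta c \<gamma> \<nu> j * Mmat c \<gamma> \<nu> \<rho> k j)
       + 1 / (\<sigma> * sqrt (real CARD('n))) * (\<rho> k * \<nu> k / c k) * pmat c \<gamma> \<nu> k k))"

definition uvec :: "real \<Rightarrow> ('n::finite \<Rightarrow> real) \<Rightarrow> ('n \<Rightarrow> real) \<Rightarrow> ('n \<Rightarrow> real) \<Rightarrow> ('n \<Rightarrow> real) \<Rightarrow> real^'n" where
  "uvec \<sigma> c \<gamma> \<nu> \<rho> = matrix_inv (mat 1 - Lmat c \<gamma> \<nu> \<rho>) *v Vvec \<sigma> c \<gamma> \<nu> \<rho>"

definition vvec :: "real \<Rightarrow> ('n::finite \<Rightarrow> real) \<Rightarrow> ('n \<Rightarrow> real) \<Rightarrow> ('n \<Rightarrow> real) \<Rightarrow> ('n \<Rightarrow> real) \<Rightarrow> real^'n" where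
  "vvec \<sigma> c \<gamma> \<nu> \<rho> = matrix_inv (mat 1 - Lmat c \<gamma> \<nu> \<rho>) *v Uvec \<sigma> c \<gamma> \<nu> \<rho>"

definition vartheta_star :: "real \<Rightarrow> ('n::finite \<Rightarrow> real) \<Rightarrow> ('n \<Rightarrow> real) \<Rightarrow> ('n \<Rightarrow> real) \<Rightarrow> ('n \<Rightarrow> real) \<Rightarrow> real" where
  "vartheta_star \<sigma> c \<gamma> \<nu> \<rho> =
     - (\<Sum>k\<in>UNIV. vvec \<sigma> c \<gamma> \<nu> \<rho> $ k) / (\<Sum>k\<in>UNIV. uvec \<sigma> c \<gamma> \<nu> \<rho> $ k)"

definition zbarS :: "real \<Rightarrow> ('n::finite \<Rightarrow> real) \<Rightarrow> ('n \<Rightarrow> real) \<Rightarrow> ('n \<Rightarrow> real) \<Rightarrow> ('n \<Rightarrow> real) \<Rightarrow> real^'n" where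
  "zbarS \<sigma> c \<gamma> \<nu> \<rho> = vartheta_star \<sigma> c \<gamma> \<nu> \<rho> *\<^sub>R uvec \<sigma> c \<gamma> \<nu> \<rho> + vvec \<sigma> c \<gamma> \<nu> \<rho>"

end

theory Submission imports Defs begin

lemma inv_apply:
  fixes A :: "real^'n^'n"
  assumes "invertible A"
  shows "A *v (matrix_inv A *v b) = b"
proof -
  have "A ** matrix_inv A = mat 1"
    using assms unfolding invertible_def matrix_inv_def by (rule someI2_ex) blast
  thus ?thesis by (simp add: matrix_vector_mul_assoc)
qed

lemma Lz_zero:
  fixes L :: "real^'n::finite^'n" and w :: "'n \<Rightarrow> real"
  assumes Lnn: "\<And>k j. L$k$j \<ge> 0" and wpos: "\<And>k. w k > 0"
    and col: "\<And>j. (\<Sum>k\<in>UNIV. w k * L$k$j) < w j"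
    and znn: "\<And>k. z$k \<ge> 0" and zle: "\<And>k. z$k \<le> (L *v z)$k"
  shows "z = 0"
proof -
  have "(\<Sum>k\<in>UNIV. w k * z$k) \<le> (\<Sum>k\<in>UNIV. w k * (L *v z)$k)"
    by (intro sum_mono mult_left_mono zle) (use wpos in \<open>auto intro: less_imp_le\<close>)
  also have "\<dots> = (\<Sum>j\<in>UNIV. (\<Sum>k\<in>UNIV. w k * L$k$j) * z$j)"
    by (simp add: matrix_vector_mult_def sum_distrib_left sum_distrib_right mult.assoc)
       (rule sum.swap)
  finally have le: "(\<Sum>j\<in>UNIV. (w j - (\<Sum>k\<in>UNIV. w k * L$k$j)) * z$j) \<le> 0"
    by (simp add: left_diff_distrib sum_subtractf)
  have nn: "\<And>j. (w j - (\<Sum>k\<in>UNIV. w k * L$k$j)) * z$j \<ge> 0"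
    using col znn by (simp add: less_imp_le)
  have ge: "(\<Sum>j\<in>UNIV. (w j - (\<Sum>k\<in>UNIV. w k * L$k$j)) * z$j) \<ge> 0"
    by (rule sum_nonneg) (rule nn)
  have iff: "(\<Sum>j\<in>UNIV. (w j - (\<Sum>k\<in>UNIV. w k * L$k$j)) * z$j) = 0 \<longleftrightarrow>
      (\<forall>j\<in>UNIV. (w j - (\<Sum>k\<in>UNIV. w k * L$k$j)) * z$j = 0)"
    by (rule sum_nonneg_eq_0_iff) (simp_all add: nn)
  have all0: "\<And>j. (w j - (\<Sum>k\<in>UNIV. w k * L$k$j)) * z$j = 0"
    using iff le ge by simp
  have "z$j = 0" for j
  proof -
    have "w j - (\<Sum>k\<in>UNIV. w k * L$k$j) \<noteq> 0" using col[of j] by simp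
    then show ?thesis using all0[of j] by simp
  qed
  thus ?thesis by (simp add: vec_eq_iff)
qed

lemma inj_IL:
  fixes L :: "real^'n::finite^'n" and w :: "'n \<Rightarrow> real"
  assumes Lnn: "\<And>k j. L$k$j \<ge> 0" and wpos: "\<And>k. w k > 0"
    and col: "\<And>j. (\<Sum>k\<in>UNIV. w k * L$k$j) < w j"
  shows "invertible (mat 1 - L)"
proof -
  have "inj ((*v) (mat 1 - L))"
  proof (rule injI)
    fix x y :: "real^'n" assume "(mat 1 - L) *v x = (mat 1 - L) *v y"
    hence e: "x - y = L *v (x - y)" by (simp add: algebra_simps)
    define z where "z = (\<chi> k. \<bar>(x - y)$k\<bar>)"
    have "z$k \<le> (L *v z)$k" for k
    proof -
      have "z$k = \<bar>(x - y)$k\<bar>" unfolding z_def by simp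
      also have "\<dots> = \<bar>(L *v (x - y))$k\<bar>" using arg_cong[OF e, of "\<lambda>v. \<bar>v$k\<bar>"] by simp
      also have "\<dots> \<le> (\<Sum>j\<in>UNIV. \<bar>L$k$j * (x-y)$j\<bar>)"
        unfolding matrix_vector_mult_def by simp
      also have "\<dots> = (L *v z)$k"
        unfolding matrix_vector_mult_def z_def using Lnn by (simp add: abs_mult)
      finally show ?thesis .
    qed
    then have "z = 0" using Lz_zero[OF Lnn wpos col] unfolding z_def by auto
    thus "x = y" unfolding z_def by (simp add: vec_eq_iff)
  qed
  thus ?thesis using matrix_left_invertible_injective invertible_left_inverse by blast
qed

lemma nonneg_IL:
  fixes L :: "real^'n::finite^'n" and w :: "'n \<Rightarrow> real"
  assumes Lnn: "\<And>k j. L$k$j \<ge> 0" and wpos: "\<And>k. w k > 0"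
    and col: "\<And>j. (\<Sum>k\<in>UNIV. w k * L$k$j) < w j"
    and eq: "(mat 1 - L) *v y = b" and bnn: "\<And>k. b$k \<ge> 0"
  shows "y$k \<ge> 0"
proof -
  have e: "y = b + L *v y" using eq by (simp add: algebra_simps)
  define z where "z = (\<chi> k. max 0 (- y$k))"
  have "z$k \<le> (L *v z)$k" for k
  proof -
    have z0: "(L *v z)$k \<ge> 0" unfolding matrix_vector_mult_def z_def
      using Lnn by (simp add: sum_nonneg)
    have "- y$k \<le> (L *v z)$k"
    proof -
      have "- y$k = - b$k - (L *v y)$k" using arg_cong[OF e, of "\<lambda>v. v$k"] by simp
      also have "\<dots> \<le> (\<Sum>j\<in>UNIV. L$k$j * (- y$j))" using bnn[of k]
        by (simp add: matrix_vector_mult_def sum_negf)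
      also have "\<dots> \<le> (\<Sum>j\<in>UNIV. L$k$j * z$j)"
        by (rule sum_mono, rule mult_left_mono) (simp_all add: z_def Lnn)
      also have "\<dots> = (L *v z)$k" by (simp add: matrix_vector_mult_def)
      finally show ?thesis .
    qed
    thus ?thesis using z0 unfolding z_def by simp
  qed
  then have "z = 0" using Lz_zero[OF Lnn wpos col, of z] unfolding z_def by auto
  then have "z$k = 0" by simp
  then have "max 0 (- y$k) = 0" unfolding z_def by simp
  thus ?thesis by (simp add: max_def split: if_splits)
qed


lemma frac_lt1: "(x::real) > 0 \<Longrightarrow> y > 0 \<Longrightarrow> y / (x + y) < 1"
  by (simp add: divide_less_eq)

lemma frac_eq1: "(x::real) > 0 \<Longrightarrow> y > 0 \<Longrightarrow> x * (1 / (x + y)) + 1 / (x + y) * y = 1"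
proof -
  assume "x > 0" "y > 0"
  then have ne: "x + y \<noteq> 0" by simp
  have "x * (1 / (x + y)) + 1 / (x + y) * y = (x + y) * (1 / (x + y))"
    by (simp only: distrib_right mult.commute)
  also have "\<dots> = 1" using ne by simp
  finally show ?thesis .
qed

lemma zero_sum_signs:
  fixes Z :: "real^'n::finite"
  assumes S: "(\<Sum>k\<in>UNIV. Z$k) = 0"
  shows "Z = 0 \<or> ((\<exists>k. Z$k > 0) \<and> (\<exists>k. Z$k < 0))"
proof (cases "\<forall>k. Z$k \<ge> 0")
  case True
  have "(\<Sum>k\<in>UNIV. Z$k) = 0 \<longleftrightarrow> (\<forall>k\<in>UNIV. Z$k = 0)"
    by (rule sum_nonneg_eq_0_iff) (use True in auto)
  then have "\<forall>k. Z$k = 0" using S by blast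
  then have "Z = 0" by (simp add: vec_eq_iff)
  then show ?thesis ..
next
  case F1: False
  then obtain k1 where k1: "Z$k1 < 0" by (auto simp: not_le)
  show ?thesis
  proof (cases "\<forall>k. Z$k \<le> 0")
    case True
    have S': "(\<Sum>k\<in>UNIV. - Z$k) = 0" using S by (simp add: sum_negf)
    have "(\<Sum>k\<in>UNIV. - Z$k) = 0 \<longleftrightarrow> (\<forall>k\<in>UNIV. - Z$k = 0)"
      by (rule sum_nonneg_eq_0_iff) (use True in auto)
    then have "- Z$k1 = 0" using S' by blast
    then show ?thesis using k1 by simp
  next
    case False
    then obtain k2 where "Z$k2 > 0" by (auto simp: not_le)
    then show ?thesis using k1 by blast
  qed
qed

context
  fixes c \<gamma> \<nu> \<rho> :: "'n::finite \<Rightarrow> real"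
  assumes cp: "\<And>i. c i > 0" and gp: "\<And>i. \<gamma> i > 0" and np: "\<And>i. \<nu> i > 0"
    and rb: "\<And>i. -1 < \<rho> i \<and> \<rho> i < 1"
begin

lemma P_pos: "pmat c \<gamma> \<nu> i j > 0"
  using cp[of i] gp[of i] np[of i] np[of j] unfolding pmat_def
  by (auto intro!: divide_pos_pos add_pos_pos mult_pos_pos)

lemma Theta_pos: "Theta c \<gamma> \<nu> j > 0"
  unfolding Theta_def by (rule sum_pos) (auto intro: P_pos)

lemma zeta_pos: "zeta c \<gamma> \<nu> j > 0"
  unfolding zeta_def using P_pos cp by simp

lemma zeta_lt1: "zeta c \<gamma> \<nu> j < 1"
proof -
  have a: "\<gamma> j * (\<nu> j)\<^sup>2 > 0" using gp[of j] np[of j] by simp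
  have b: "1 / c j > 0" using cp[of j] by simp
  have "zeta c \<gamma> \<nu> j = (1 / c j) / (\<gamma> j * (\<nu> j)\<^sup>2 + 1 / c j)"
    unfolding zeta_def pmat_def by simp
  also have "\<dots> < 1" using frac_lt1[OF a b] .
  finally show ?thesis .
qed

lemma key_ident:
  "\<gamma> j * ((\<rho> i)\<^sup>2 * (\<nu> i)\<^sup>2 * pmat c \<gamma> \<nu> j i) + (if i = j then (\<rho> j)\<^sup>2 * zeta c \<gamma> \<nu> j else 0) = (\<rho> i)\<^sup>2"
proof (cases "i = j")
  case True
  have a: "\<gamma> j * (\<nu> j)\<^sup>2 > 0" using gp[of j] np[of j] by simp
  have b: "1 / c j > 0" using cp by simp
  have p: "pmat c \<gamma> \<nu> j j = 1 / (\<gamma> j * (\<nu> j)\<^sup>2 + 1 / c j)" unfolding pmat_def by simp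
  have q: "pmat c \<gamma> \<nu> j j / c j = pmat c \<gamma> \<nu> j j * (1 / c j)" by simp
  have "\<gamma> j * (\<nu> j)\<^sup>2 * pmat c \<gamma> \<nu> j j + pmat c \<gamma> \<nu> j j / c j = 1"
    unfolding q unfolding p using frac_eq1[OF a b] .
  then have "(\<rho> j)\<^sup>2 * (\<gamma> j * (\<nu> j)\<^sup>2 * pmat c \<gamma> \<nu> j j + pmat c \<gamma> \<nu> j j / c j) = (\<rho> j)\<^sup>2" by simp
  then show ?thesis using True unfolding zeta_def by (simp add: algebra_simps)
next
  case False
  then show ?thesis unfolding pmat_def using gp[of j] np[of i] by (simp add: field_simps)
qed

lemma sum_ident: "(\<rho> j)\<^sup>2 * zeta c \<gamma> \<nu> j + \<gamma> j * upsilon c \<gamma> \<nu> \<rho> j = (\<Sum>i\<in>UNIV. (\<rho> i)\<^sup>2)"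
proof -
  have "(\<Sum>i\<in>UNIV. (\<rho> i)\<^sup>2) = (\<Sum>i\<in>UNIV. \<gamma> j * ((\<rho> i)\<^sup>2 * (\<nu> i)\<^sup>2 * pmat c \<gamma> \<nu> j i) + (if i = j then (\<rho> j)\<^sup>2 * zeta c \<gamma> \<nu> j else 0))"
    using key_ident by simp
  also have "\<dots> = \<gamma> j * upsilon c \<gamma> \<nu> \<rho> j + (\<rho> j)\<^sup>2 * zeta c \<gamma> \<nu> j"
    unfolding upsilon_def by (simp add: sum.distrib sum_distrib_left)
  finally show ?thesis by simp
qed

lemma rho_sum_lt: "(\<Sum>i\<in>UNIV. (\<rho> i)\<^sup>2) < real CARD('n)"
proof -
  have "(\<Sum>i\<in>UNIV. (\<rho> i)\<^sup>2) < (\<Sum>i\<in>(UNIV::'n set). 1)"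
  proof (rule sum_strict_mono)
    fix i :: 'n
    have "\<bar>\<rho> i\<bar> < 1" using rb[of i] by auto
    then show "(\<rho> i)\<^sup>2 < 1" by (simp add: abs_square_less_1)
  qed auto
  thus ?thesis by simp
qed

lemma phi_pos: "varphi c \<gamma> \<nu> \<rho> k > 0"
proof -
  have z: "(\<rho> k)\<^sup>2 * zeta c \<gamma> \<nu> k \<ge> 0" using zeta_pos[of k] by simp
  have "\<gamma> k * upsilon c \<gamma> \<nu> \<rho> k < real CARD('n)"
    using sum_ident[of k] rho_sum_lt z by linarith
  then have "\<gamma> k / real CARD('n) * upsilon c \<gamma> \<nu> \<rho> k < 1"
    by (simp add: field_simps)
  then show ?thesis unfolding varphi_def by simp
qed

lemma L_nonneg: "Lmat c \<gamma> \<nu> \<rho> $ k $ j \<ge> 0"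
  unfolding Lmat_def using zeta_pos[of j] P_pos[of k j] phi_pos[of k] Theta_pos[of j]
  by (simp add: less_imp_le)

lemma col_lt: "(\<Sum>k\<in>UNIV. varphi c \<gamma> \<nu> \<rho> k * Lmat c \<gamma> \<nu> \<rho> $ k $ j) < varphi c \<gamma> \<nu> \<rho> j"
proof -
  have "varphi c \<gamma> \<nu> \<rho> k * Lmat c \<gamma> \<nu> \<rho> $ k $ j =
     (\<rho> j)\<^sup>2 * zeta c \<gamma> \<nu> j / (real CARD('n) * Theta c \<gamma> \<nu> j) * pmat c \<gamma> \<nu> k j" for k
    unfolding Lmat_def using phi_pos[of k] by (simp add: field_simps)
  then have "(\<Sum>k\<in>UNIV. varphi c \<gamma> \<nu> \<rho> k * Lmat c \<gamma> \<nu> \<rho> $ k $ j)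
     = (\<rho> j)\<^sup>2 * zeta c \<gamma> \<nu> j / (real CARD('n) * Theta c \<gamma> \<nu> j) * Theta c \<gamma> \<nu> j"
    unfolding Theta_def by (simp add: sum_distrib_left)
  also have "\<dots> = (\<rho> j)\<^sup>2 * zeta c \<gamma> \<nu> j / real CARD('n)"
    using Theta_pos[of j] by simp
  also have "\<dots> < varphi c \<gamma> \<nu> \<rho> j"
  proof -
    have "(\<rho> j)\<^sup>2 * zeta c \<gamma> \<nu> j + \<gamma> j * upsilon c \<gamma> \<nu> \<rho> j < real CARD('n)"
      using sum_ident[of j] rho_sum_lt by linarith
    then show ?thesis unfolding varphi_def by (simp add: field_simps)
  qed
  finally show ?thesis .
qed

lemma V_pos: "\<sigma> > 0 \<Longrightarrow> Vvec \<sigma> c \<gamma> \<nu> \<rho> $ k > 0"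
  unfolding Vvec_def using phi_pos[of k] gp[of k] by simp

lemma sU_neg:
  assumes sp: "\<sigma> > 0" and s: "s \<in> {-1, 1}" and sr: "\<And>i. s * \<rho> i \<ge> 0" and ex: "\<exists>i. \<rho> i \<noteq> 0"
  shows "s * Uvec \<sigma> c \<gamma> \<nu> \<rho> $ k < 0"
proof -
  obtain i0 where i0: "\<rho> i0 \<noteq> 0" using ex by blast
  have si0: "s * \<rho> i0 > 0" using sr[of i0] i0 s by auto
  define a where "a = 1 / (\<sigma> * sqrt (real CARD('n)))"
  have ap: "a > 0" unfolding a_def using sp by simp
  define X where "X = (\<Sum>j\<in>UNIV. (1 - zeta c \<gamma> \<nu> j) / Theta c \<gamma> \<nu> j * Mmat c \<gamma> \<nu> \<rho> k j)"
  define Y where "Y = (\<rho> k * \<nu> k / c k) * pmat c \<gamma> \<nu> k k"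
  have trm: "\<And>j. s * ((1 - zeta c \<gamma> \<nu> j) / Theta c \<gamma> \<nu> j * Mmat c \<gamma> \<nu> \<rho> k j)
      = (1 - zeta c \<gamma> \<nu> j) / Theta c \<gamma> \<nu> j * ((s * \<rho> j) * \<nu> j * pmat c \<gamma> \<nu> k j)"
    unfolding Mmat_def by (simp add: algebra_simps)
  have tnn: "\<And>j. (1 - zeta c \<gamma> \<nu> j) / Theta c \<gamma> \<nu> j * ((s * \<rho> j) * \<nu> j * pmat c \<gamma> \<nu> k j) \<ge> 0"
  proof -
    fix j
    have "(s * \<rho> j) * \<nu> j * pmat c \<gamma> \<nu> k j \<ge> 0"
      using sr[of j] np[of j] P_pos[of k j] by simp
    moreover have "(1 - zeta c \<gamma> \<nu> j) / Theta c \<gamma> \<nu> j \<ge> 0"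
      using zeta_lt1[of j] Theta_pos[of j] by simp
    ultimately show "?thesis j" by (rule mult_nonneg_nonneg[rotated])
  qed
  have tpos: "(1 - zeta c \<gamma> \<nu> i0) / Theta c \<gamma> \<nu> i0 * ((s * \<rho> i0) * \<nu> i0 * pmat c \<gamma> \<nu> k i0) > 0"
  proof -
    have "(s * \<rho> i0) * \<nu> i0 * pmat c \<gamma> \<nu> k i0 > 0"
      using si0 np[of i0] P_pos[of k i0] by simp
    moreover have "(1 - zeta c \<gamma> \<nu> i0) / Theta c \<gamma> \<nu> i0 > 0"
      using zeta_lt1[of i0] Theta_pos[of i0] by simp
    ultimately show ?thesis by (rule mult_pos_pos[rotated])
  qed
  have sX: "s * X > 0"
    unfolding X_def sum_distrib_left trm
    by (rule sum_pos2[of UNIV i0]) (use tnn tpos in auto)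
  have sY: "s * Y \<ge> 0"
  proof -
    have "s * Y = (s * \<rho> k) * \<nu> k / c k * pmat c \<gamma> \<nu> k k" unfolding Y_def by simp
    also have "\<dots> \<ge> 0" using sr[of k] np[of k] cp[of k] P_pos[of k k] by simp
    finally show ?thesis .
  qed
  have "s * Uvec \<sigma> c \<gamma> \<nu> \<rho> $ k = - (1 / varphi c \<gamma> \<nu> \<rho> k) * (a * (s * X + s * Y))"
    unfolding Uvec_def a_def X_def Y_def by (simp add: algebra_simps)
  also have "\<dots> < 0"
    using phi_pos[of k] ap sX sY by (simp add: mult_pos_pos)
  finally show ?thesis .
qed

end

theorem mainTheorem9:
  fixes \<sigma> :: real and c \<gamma> \<nu> \<rho> :: "'n::finite \<Rightarrow> real" and s :: real
  assumes "\<sigma> > 0"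
    and "\<And>i. c i > 0" and "\<And>i. \<gamma> i > 0" and "\<And>i. \<nu> i > 0"
    and "\<And>i. -1 < \<rho> i \<and> \<rho> i < 1"
    and "s \<in> {-1, 1}" and "\<And>i. s * \<rho> i \<ge> 0" and "\<exists>i. \<rho> i \<noteq> 0"
  shows "(\<forall>k. uvec \<sigma> c \<gamma> \<nu> \<rho> $ k > 0)
       \<and> (\<forall>k. s * vvec \<sigma> c \<gamma> \<nu> \<rho> $ k < 0)
       \<and> (zbarS \<sigma> c \<gamma> \<nu> \<rho> = 0
          \<or> ((\<exists>k. zbarS \<sigma> c \<gamma> \<nu> \<rho> $ k > 0) \<and> (\<exists>k. zbarS \<sigma> c \<gamma> \<nu> \<rho> $ k < 0)))"
proof -
  note A = assms(2-5)
  define L where "L = Lmat c \<gamma> \<nu> \<rho>"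
  define u where "u = uvec \<sigma> c \<gamma> \<nu> \<rho>"
  define v where "v = vvec \<sigma> c \<gamma> \<nu> \<rho>"
  define V where "V = Vvec \<sigma> c \<gamma> \<nu> \<rho>"
  define U where "U = Uvec \<sigma> c \<gamma> \<nu> \<rho>"
  have Lnn: "\<And>k j. L$k$j \<ge> 0" unfolding L_def using L_nonneg[OF A] .
  have wp: "\<And>k. varphi c \<gamma> \<nu> \<rho> k > 0" using phi_pos[OF A] .
  have col: "\<And>j. (\<Sum>k\<in>UNIV. varphi c \<gamma> \<nu> \<rho> k * L$k$j) < varphi c \<gamma> \<nu> \<rho> j"
    unfolding L_def using col_lt[OF A] .
  have inv: "invertible (mat 1 - L)" using inj_IL[OF Lnn wp col] .
  have eu: "(mat 1 - L) *v u = V"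
    unfolding u_def uvec_def L_def[symmetric] V_def using inv_apply[OF inv] .
  have ev: "(mat 1 - L) *v v = U"
    unfolding v_def vvec_def L_def[symmetric] U_def using inv_apply[OF inv] .
  have Vp: "\<And>k. V$k > 0" unfolding V_def using V_pos[OF A assms(1)] .
  have sU: "\<And>k. s * U$k < 0" unfolding U_def using sU_neg[OF A assms(1,6,7,8)] .
  have Lv_nn: "\<And>x k. (\<And>j. x$j \<ge> 0) \<Longrightarrow> (L *v x)$k \<ge> 0"
    unfolding matrix_vector_mult_def using Lnn by (simp add: sum_nonneg)
  have unn: "\<And>k. u$k \<ge> 0" using nonneg_IL[OF Lnn wp col eu] Vp by (simp add: less_imp_le)
  have upos: "\<forall>k. u$k > 0"
  proof
    fix k
    have "u = V + L *v u" using eu by (simp add: algebra_simps)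
    then have "u$k = V$k + (L *v u)$k" by (metis vector_add_component)
    then show "u$k > 0" using Vp[of k] Lv_nn[of u k, OF unn] by linarith
  qed
  define z where "z = (- s) *\<^sub>R v"
  have Lz: "(L *v z)$k = - s * (L *v v)$k" for k
  proof -
    have "(L *v z)$k = (\<Sum>j\<in>UNIV. L$k$j * (- s * v$j))"
      by (simp add: z_def matrix_vector_mult_def)
    also have "\<dots> = - s * (\<Sum>j\<in>UNIV. L$k$j * v$j)"
      by (simp add: sum_distrib_left mult.left_commute)
    finally show ?thesis by (simp add: matrix_vector_mult_def)
  qed
  have IL: "\<And>x k. ((mat 1 - L) *v x)$k = x$k - (L *v x)$k"
    by (simp add: matrix_vector_mult_diff_rdistrib)
  have ez: "(mat 1 - L) *v z = (- s) *\<^sub>R U"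
  proof (subst vec_eq_iff, intro allI)
    fix k
    have "((mat 1 - L) *v z)$k = - s * (v$k - (L *v v)$k)"
      unfolding IL Lz by (simp add: z_def algebra_simps)
    also have "\<dots> = - s * U$k" using arg_cong[OF ev, of "\<lambda>x. x$k"] unfolding IL by simp
    finally show "((mat 1 - L) *v z)$k = ((- s) *\<^sub>R U)$k" by simp
  qed
  have znn: "\<And>k. z$k \<ge> 0"
    using nonneg_IL[OF Lnn wp col ez] sU by (simp add: less_imp_le)
  have vneg: "\<forall>k. s * v$k < 0"
  proof
    fix k
    have "v = U + L *v v" using ev by (simp add: algebra_simps)
    then have "v$k = U$k + (L *v v)$k" by (metis vector_add_component)
    moreover have "s * (L *v v)$k = - (L *v z)$k" using Lz[of k] by simp
    ultimately have "s * v$k = s * U$k - (L *v z)$k" by (simp add: algebra_simps)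
    then show "s * v$k < 0" using sU[of k] Lv_nn[of z k, OF znn] by linarith
  qed
  have su: "(\<Sum>k\<in>UNIV. u$k) > 0"
    using upos by (intro sum_pos) auto
  define Z where "Z = zbarS \<sigma> c \<gamma> \<nu> \<rho>"
  define th where "th = vartheta_star \<sigma> c \<gamma> \<nu> \<rho>"
  have Zk: "Z$k = th * u$k + v$k" for k
    unfolding Z_def zbarS_def u_def v_def th_def by simp
  have thu: "th * (\<Sum>k\<in>UNIV. u$k) = - (\<Sum>k\<in>UNIV. v$k)"
  proof -
    have "th = - (\<Sum>k\<in>UNIV. v$k) / (\<Sum>k\<in>UNIV. u$k)"
      unfolding th_def vartheta_star_def u_def v_def ..
    then show ?thesis using su by simp
  qed
  have sumZ: "(\<Sum>k\<in>UNIV. Z$k) = 0"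
  proof -
    have "(\<Sum>k\<in>UNIV. Z$k) = th * (\<Sum>k\<in>UNIV. u$k) + (\<Sum>k\<in>UNIV. v$k)"
      unfolding Zk by (simp add: sum.distrib sum_distrib_left)
    then show ?thesis using thu by simp
  qed
  have third: "Z = 0 \<or> ((\<exists>k. Z$k > 0) \<and> (\<exists>k. Z$k < 0))" using zero_sum_signs[OF sumZ] .
  show ?thesis unfolding u_def[symmetric] v_def[symmetric] Z_def[symmetric]
    using upos vneg third by (intro conjI)
qed

end
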